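(* Let $p$ and $q$ be distinct primes and $n = p^2 q$. Then the non-nilradical graph $\Omega(\mathbb{Z}_n)$ is not very cost effective.
   Context: $\mathbb{Z}_n$ is the ring of residue classes modulo $n$. The non-nilradical graph $\Omega(\mathbb{Z}_n)$ has as vertices the non-nilpotent zero-divisors of $\mathbb{Z}_n$, two distinct vertices being adjacent iff their product is $0$. For a graph $G=(V,E)$ and $S\subseteq V$, a vertex $v\in S$ is very cost effective if $|N(v)\cap S| < |N(v)\cap (V\setminus S)|$; $S$ is very cost effective if every vertex of $S$ is. A bipartition $\{S, V\setminus S\}$ is very cost effective if both parts are very cost effective, and $G$ is very cost effective if it has a very cost effective bipartition. *)

theory Defs
  imports Main "HOL-Computational_Algebra.Primes"
begin

definition nbhd :: "'a set \<Rightarrow> ('a \<Rightarrow> 'a \<Rightarrow> bool) \<Rightarrow> 'a \<Rightarrow> 'a set" where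
  "nbhd V E v = {u \<in> V. E v u}"

definition very_cost_effective_vertex ::
  "'a set \<Rightarrow> ('a \<Rightarrow> 'a \<Rightarrow> bool) \<Rightarrow> 'a set \<Rightarrow> 'a \<Rightarrow> bool" where
  "very_cost_effective_vertex V E S v \<longleftrightarrow>
     card (nbhd V E v \<inter> S) < card (nbhd V E v \<inter> (V - S))"

definition very_cost_effective_set ::
  "'a set \<Rightarrow> ('a \<Rightarrow> 'a \<Rightarrow> bool) \<Rightarrow> 'a set \<Rightarrow> bool" where
  "very_cost_effective_set V E S \<longleftrightarrow> (\<forall>v\<in>S. very_cost_effective_vertex V E S v)"

definition very_cost_effective_graph :: "'a set \<Rightarrow> ('a \<Rightarrow> 'a \<Rightarrow> bool) \<Rightarrow> bool" where
  "very_cost_effective_graph V E \<longleftrightarrow>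
     (\<exists>S. S \<subseteq> V \<and> very_cost_effective_set V E S \<and> very_cost_effective_set V E (V - S))"

text \<open>The ring Z_n is modelled by the residues {0..<n} with multiplication mod n.\<close>

definition zero_divisor_mod :: "nat \<Rightarrow> nat \<Rightarrow> bool" where
  "zero_divisor_mod n x \<longleftrightarrow> x < n \<and> (\<exists>y<n. y \<noteq> 0 \<and> (x * y) mod n = 0)"

definition nilpotent_mod :: "nat \<Rightarrow> nat \<Rightarrow> bool" where
  "nilpotent_mod n x \<longleftrightarrow> x < n \<and> (\<exists>k\<ge>1. (x ^ k) mod n = 0)"

definition nonnil_vertices :: "nat \<Rightarrow> nat set" where
  "nonnil_vertices n = {x. zero_divisor_mod n x \<and> \<not> nilpotent_mod n x}"

definition nonnil_adj :: "nat \<Rightarrow> nat \<Rightarrow> nat \<Rightarrow> bool" where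
  "nonnil_adj n x y \<longleftrightarrow> x \<noteq> y \<and> (x * y) mod n = 0"

end

theory Submission
  imports Defs
begin

lemma p_in_V:
  fixes p q :: nat
  assumes "prime p" and "prime q" and "p \<noteq> q"
  shows "p \<in> nonnil_vertices (p^2 * q)"
proof -
  have p2: "p \<ge> 2" "q \<ge> 2" using assms prime_ge_2_nat by auto
  have lt: "p < p^2 * q"
  proof -
    have "p < p * p" proof -
      have "p*1 < p*p" using p2 by (intro mult_strict_left_mono) auto
      then show ?thesis by simp
    qed
    also have "p * p \<le> p^2 * q" using p2 by (simp add: power2_eq_square)
    finally show ?thesis .
  qed
  have zd: "zero_divisor_mod (p^2*q) p"
    unfolding zero_divisor_mod_def
  proof (intro conjI lt exI[of _ "p*q"])
    show "p * q < p^2 * q" using p2 by (simp add: power2_eq_square)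
    show "p * q \<noteq> 0" using p2 by simp
    show "p * (p * q) mod (p^2 * q) = 0" by (simp add: power2_eq_square mult.assoc)
  qed
  have nn: "\<not> nilpotent_mod (p^2*q) p"
  proof
    assume "nilpotent_mod (p^2*q) p"
    then obtain k where "p^2*q dvd p^k" unfolding nilpotent_mod_def by auto
    then have "q dvd p^k" using dvd_trans[OF dvd_triv_right[of q "p^2"]] by blast
    then have "q dvd p" using assms(2) prime_dvd_power by blast
    then show False using assms primes_dvd_imp_eq by blast
  qed
  show ?thesis unfolding nonnil_vertices_def using zd nn by simp
qed

lemma nbhd_p_empty:
  fixes p q :: nat
  assumes "prime p" and "prime q" and "p \<noteq> q"
  shows "nbhd (nonnil_vertices (p^2 * q)) (nonnil_adj (p^2 * q)) p = {}"
proof -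
  have p2: "p \<ge> 2" "q \<ge> 2" using assms prime_ge_2_nat by auto
  { fix u assume uV: "u \<in> nonnil_vertices (p^2 * q)" and d: "p^2 * q dvd p * u"
    have "p * (p * q) = p^2 * q" by (simp add: power2_eq_square)
    with d have "p * (p * q) dvd p * u" by metis
    moreover have "p \<noteq> 0" using p2 by simp
    ultimately have "p * q dvd u" using nat_mult_dvd_cancel_disj[of p "p*q" u] by blast
    then obtain m where um: "u = p * q * m" by blast
    have "u^2 = (p^2 * q) * (q * m^2)" using um by (simp add: power2_eq_square algebra_simps)
    then have "(u^2) mod (p^2*q) = 0" by simp
    moreover have "u < p^2*q" using uV unfolding nonnil_vertices_def zero_divisor_mod_def by simp
    ultimately have "nilpotent_mod (p^2*q) u" unfolding nilpotent_mod_def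
      by (intro conjI exI[of _ 2]) auto
    then have False using uV unfolding nonnil_vertices_def by simp }
  then show ?thesis unfolding nbhd_def nonnil_adj_def by auto
qed

theorem mainTheorem6:
  fixes p q :: nat
  assumes "prime p" and "prime q" and "p \<noteq> q"
  shows "\<not> very_cost_effective_graph (nonnil_vertices (p^2 * q)) (nonnil_adj (p^2 * q))"
proof
  let ?V = "nonnil_vertices (p^2 * q)" and ?E = "nonnil_adj (p^2 * q)"
  assume "very_cost_effective_graph ?V ?E"
  then obtain S where S: "very_cost_effective_set ?V ?E S" "very_cost_effective_set ?V ?E (?V - S)"
    unfolding very_cost_effective_graph_def by blast
  have pV: "p \<in> ?V" using p_in_V assms by blast
  have e: "nbhd ?V ?E p = {}" using nbhd_p_empty assms by blast
  show False
  proof (cases "p \<in> S")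
    case True
    then show False using S(1) e unfolding very_cost_effective_set_def very_cost_effective_vertex_def by auto
  next
    case False
    then have "p \<in> ?V - S" using pV by simp
    then have "very_cost_effective_vertex ?V ?E (?V - S) p" using S(2) unfolding very_cost_effective_set_def by blast
    then show False using e unfolding very_cost_effective_vertex_def by simp
  qed
qed

end
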